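(* The graph $\{(x_1,\dots,x_n,y)\in\mathbb R^{n+1}: y=x_1^2+\cdots+x_n^2\}$ (with the metric induced from $\mathbb R^{n+1}$) is $\Phi$-SSU if and only if $n>4$.
   Context: A Riemannian $n$-manifold $N$ is $\Phi$-SSU if there is an isometric immersion $N\to\mathbb R^q$ with second fundamental form $\mathsf B$ such that for every $y\in N$ and every unit $\mathsf x\in T_yN$, $\sum_{\beta=1}^n\big(4|\mathsf B(\mathsf x,\mathsf e_\beta)|^2-\langle \mathsf B(\mathsf x,\mathsf x),\mathsf B(\mathsf e_\beta,\mathsf e_\beta)\rangle\big)<0$, where $\{\mathsf e_\beta\}$ is an orthonormal basis of $T_yN$. *)

theory Defs
  imports "HOL-Analysis.Analysis"
begin

text \<open>Manifolds with a global chart R^n. A Riemannian metric in the chart is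
  g x v w (inner product of tangent vectors v w at the point with coordinates x).
  An isometric immersion into R^q is given in coordinates by q smooth component
  functions F 0, ..., F (q-1) on R^n.\<close>

definition dderiv :: "(real^'n \<Rightarrow> real) \<Rightarrow> real^'n \<Rightarrow> real^'n \<Rightarrow> real" where
  "dderiv f v x = frechet_derivative f (at x) v"

definition smooth_fn :: "(real^'n \<Rightarrow> real) \<Rightarrow> bool" where
  "smooth_fn f \<longleftrightarrow> (\<forall>vs x. (foldr (\<lambda>v h. dderiv h v) vs f) differentiable (at x))"

text \<open>Vectors of R^q are represented as functions nat => real (only indices < q matter).\<close>
definition ipq :: "nat \<Rightarrow> (nat \<Rightarrow> real) \<Rightarrow> (nat \<Rightarrow> real) \<Rightarrow> real" where
  "ipq q a b = (\<Sum>k<q. a k * b k)"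

definition DF :: "(nat \<Rightarrow> real^'n \<Rightarrow> real) \<Rightarrow> real^'n \<Rightarrow> real^'n \<Rightarrow> nat \<Rightarrow> real" where
  "DF F x v = (\<lambda>k. dderiv (F k) v x)"

definition D2F :: "(nat \<Rightarrow> real^'n \<Rightarrow> real) \<Rightarrow> real^'n \<Rightarrow> real^'n \<Rightarrow> real^'n \<Rightarrow> nat \<Rightarrow> real" where
  "D2F F x v w = (\<lambda>k. dderiv (dderiv (F k) v) w x)"

definition isometric_immersion ::
  "(real^'n \<Rightarrow> real^'n \<Rightarrow> real^'n \<Rightarrow> real) \<Rightarrow> nat \<Rightarrow> (nat \<Rightarrow> real^'n \<Rightarrow> real) \<Rightarrow> bool" where
  "isometric_immersion g q F \<longleftrightarrow>
     (\<forall>k<q. smooth_fn (F k)) \<and> (\<forall>x v w. ipq q (DF F x v) (DF F x w) = g x v w)"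

text \<open>Second fundamental form: normal component (w.r.t. the tangent space spanned by
  the DF x z) of the second derivative D2F x v w.\<close>
definition sff :: "nat \<Rightarrow> (nat \<Rightarrow> real^'n \<Rightarrow> real) \<Rightarrow> real^'n \<Rightarrow> real^'n \<Rightarrow> real^'n \<Rightarrow> nat \<Rightarrow> real" where
  "sff q F x v w = (THE b. (\<forall>k\<ge>q. b k = 0) \<and> (\<forall>z. ipq q b (DF F x z) = 0) \<and>
       (\<exists>z. \<forall>k<q. D2F F x v w k = DF F x z k + b k))"

definition orthonormal_frame ::
  "(real^'n \<Rightarrow> real^'n \<Rightarrow> real^'n \<Rightarrow> real) \<Rightarrow> real^'n \<Rightarrow> ('n \<Rightarrow> real^'n) \<Rightarrow> bool" where
  "orthonormal_frame g x e \<longleftrightarrow> (\<forall>i j. g x (e i) (e j) = (if i = j then 1 else 0))"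

definition Phi_SSU :: "(real^'n \<Rightarrow> real^'n \<Rightarrow> real^'n \<Rightarrow> real) \<Rightarrow> bool" where
  "Phi_SSU g \<longleftrightarrow> (\<exists>q F. isometric_immersion g q F \<and>
     (\<forall>x v e. g x v v = 1 \<longrightarrow> orthonormal_frame g x e \<longrightarrow>
        (\<Sum>\<beta>\<in>UNIV. 4 * ipq q (sff q F x v (e \<beta>)) (sff q F x v (e \<beta>))
                 - ipq q (sff q F x v v) (sff q F x (e \<beta>) (e \<beta>))) < 0))"

text \<open>Metric induced on the graph y = |x|^2 via the chart x \<mapsto> (x, |x|^2).\<close>
definition paraboloid_metric :: "real^'n \<Rightarrow> real^'n \<Rightarrow> real^'n \<Rightarrow> real" where
  "paraboloid_metric x v w = v \<bullet> w + 4 * (x \<bullet> v) * (x \<bullet> w)"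

end

theory Submission
  imports Defs
begin

lemma neg_dir:
  assumes "Phi_SSU (paraboloid_metric :: real^'n \<Rightarrow> real^'n \<Rightarrow> real^'n \<Rightarrow> real)"
  shows "CARD('n) > 4"
proof (rule ccontr)
  assume nle: "\<not> CARD('n) > 4"
  from assms obtain q F where H: "\<forall>x v e. (paraboloid_metric :: real^'n \<Rightarrow> real^'n \<Rightarrow> real^'n \<Rightarrow> real) x v v = 1 \<longrightarrow> orthonormal_frame paraboloid_metric x e \<longrightarrow>
        (\<Sum>\<beta>\<in>UNIV. 4 * ipq q (sff q F x v (e \<beta>)) (sff q F x v (e \<beta>))
                 - ipq q (sff q F x v v) (sff q F x (e \<beta>) (e \<beta>))) < 0"
    unfolding Phi_SSU_def by blast
  define E :: "'n \<Rightarrow> real^'n" where "E = (\<lambda>i. axis i 1)"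
  define b where "b = (\<lambda>\<alpha> \<beta>. sff q F 0 (E \<alpha>) (E \<beta>))"
  have on: "orthonormal_frame paraboloid_metric 0 E"
    unfolding orthonormal_frame_def paraboloid_metric_def E_def by (simp add: inner_axis_axis)
  have each: "(\<Sum>\<beta>\<in>UNIV. 4 * ipq q (b \<alpha> \<beta>) (b \<alpha> \<beta>) - ipq q (b \<alpha> \<alpha>) (b \<beta> \<beta>)) < 0" for \<alpha>
  proof -
    have "paraboloid_metric 0 (E \<alpha>) (E \<alpha>) = 1"
      unfolding paraboloid_metric_def E_def by (simp add: inner_axis_axis)
    then show ?thesis using H on unfolding b_def by blast
  qed
  have neg: "(\<Sum>\<alpha>\<in>UNIV. \<Sum>\<beta>\<in>UNIV. 4 * ipq q (b \<alpha> \<beta>) (b \<alpha> \<beta>) - ipq q (b \<alpha> \<alpha>) (b \<beta> \<beta>)) < 0"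
  proof -
    have "(\<Sum>\<alpha>\<in>UNIV. \<Sum>\<beta>\<in>UNIV. 4 * ipq q (b \<alpha> \<beta>) (b \<alpha> \<beta>) - ipq q (b \<alpha> \<alpha>) (b \<beta> \<beta>)) < (\<Sum>\<alpha>\<in>(UNIV::'n set). 0)"
      by (rule sum_strict_mono) (auto simp: each)
    then show ?thesis by simp
  qed
  have eq: "(\<Sum>\<alpha>\<in>UNIV. \<Sum>\<beta>\<in>UNIV. 4 * ipq q (b \<alpha> \<beta>) (b \<alpha> \<beta>) - ipq q (b \<alpha> \<alpha>) (b \<beta> \<beta>))
      = (\<Sum>k<q. 4 * (\<Sum>\<alpha>\<in>UNIV. \<Sum>\<beta>\<in>UNIV. (b \<alpha> \<beta> k)\<^sup>2) - (\<Sum>\<alpha>\<in>UNIV. b \<alpha> \<alpha> k)\<^sup>2)"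
    unfolding ipq_def
    apply (simp add: sum_subtractf sum_distrib_left sum.swap[of _ "{..<q}"] power2_eq_square sum_product sum_distrib_right)
      apply (rule sum.cong, simp) apply (subst sum.swap) apply (simp add: mult.commute) done
  have nonneg: "4 * (\<Sum>\<alpha>\<in>UNIV. \<Sum>\<beta>\<in>UNIV. (b \<alpha> \<beta> k)\<^sup>2) - (\<Sum>\<alpha>\<in>UNIV. b \<alpha> \<alpha> k)\<^sup>2 \<ge> 0" for k
  proof -
    have "(\<Sum>\<alpha>\<in>UNIV. b \<alpha> \<alpha> k)\<^sup>2 \<le> (\<Sum>\<alpha>\<in>UNIV. (b \<alpha> \<alpha> k)\<^sup>2) * CARD('n)"
      by (rule sum_squared_le_sum_of_squares)
    also have "\<dots> \<le> (\<Sum>\<alpha>\<in>UNIV. (b \<alpha> \<alpha> k)\<^sup>2) * 4"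
      using nle by (intro mult_left_mono) (auto intro: sum_nonneg)
    also have "(\<Sum>\<alpha>\<in>UNIV. (b \<alpha> \<alpha> k)\<^sup>2) \<le> (\<Sum>\<alpha>\<in>UNIV. \<Sum>\<beta>\<in>UNIV. (b \<alpha> \<beta> k)\<^sup>2)"
      by (intro sum_mono member_le_sum) auto
    finally show ?thesis by linarith
  qed
  have "(\<Sum>k<q. 4 * (\<Sum>\<alpha>\<in>UNIV. \<Sum>\<beta>\<in>UNIV. (b \<alpha> \<beta> k)\<^sup>2) - (\<Sum>\<alpha>\<in>UNIV. b \<alpha> \<alpha> k)\<^sup>2) \<ge> 0"
    using nonneg by (intro sum_nonneg) auto
  with neg eq show False by linarith
qed

definition Q :: "real \<Rightarrow> real^'n \<Rightarrow> real \<Rightarrow> real^'n \<Rightarrow> real" where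
  "Q c b d = (\<lambda>y. c + b \<bullet> y + d * (y \<bullet> y))"

lemma Q_has_derivative: "(Q c b d has_derivative (\<lambda>v. b \<bullet> v + 2 * d * (y \<bullet> v))) (at y)"
proof -
  have "((\<lambda>y. c + b \<bullet> y + d * (y \<bullet> y)) has_derivative (\<lambda>v. 0 + b \<bullet> v + d * (y \<bullet> v + v \<bullet> y))) (at y)"
    by (intro derivative_eq_intros) auto
  then show ?thesis unfolding Q_def by (simp add: inner_commute algebra_simps)
qed

lemma dderiv_Q: "dderiv (Q c b d) v = Q (b \<bullet> v) ((2 * d) *\<^sub>R v) 0"
proof (rule ext)
  fix x
  have "frechet_derivative (Q c b d) (at x) = (\<lambda>v. b \<bullet> v + 2 * d * (x \<bullet> v))"
    using frechet_derivative_at[OF Q_has_derivative] by metis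
  then show "dderiv (Q c b d) v x = Q (b \<bullet> v) ((2 * d) *\<^sub>R v) 0 x"
    unfolding dderiv_def by (simp add: Q_def inner_commute)
qed

lemma foldr_Q: "\<exists>c' b' d'. foldr (\<lambda>v h. dderiv h v) vs (Q c b d) = Q c' b' d'"
  by (induction vs) (auto simp: dderiv_Q, blast)

lemma smooth_Q: "smooth_fn (Q c b d)"
  unfolding smooth_fn_def
proof (intro allI)
  fix vs x
  obtain c' b' d' where "foldr (\<lambda>v h. dderiv h v) vs (Q c b d) = Q c' b' d'"
    using foldr_Q by blast
  then show "foldr (\<lambda>v h. dderiv h v) vs (Q c b d) differentiable at x"
    using Q_has_derivative unfolding differentiable_def by metis
qed

lemma Q_apply: "Q c b d x = c + b \<bullet> x + d * (x \<bullet> x)"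
  by (simp add: Q_def)

lemma sff_unique:
  assumes b0: "\<forall>k\<ge>q. b k = 0" and borth: "\<forall>z. ipq q b (DF F x z) = 0"
    and bz: "\<forall>k<q. D2F F x v w k = DF F x zz k + b k"
    and lin: "\<And>z1 z2 k. k < q \<Longrightarrow> DF F x (z1 - z2) k = DF F x z1 k - DF F x z2 k"
  shows "sff q F x v w = b"
  unfolding sff_def
proof (rule the_equality)
  show "(\<forall>k\<ge>q. b k = 0) \<and> (\<forall>z. ipq q b (DF F x z) = 0) \<and> (\<exists>z. \<forall>k<q. D2F F x v w k = DF F x z k + b k)"
    using assms by blast
next
  fix b'
  assume "(\<forall>k\<ge>q. b' k = 0) \<and> (\<forall>z. ipq q b' (DF F x z) = 0) \<and> (\<exists>z. \<forall>k<q. D2F F x v w k = DF F x z k + b' k)"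
  then obtain z1 where b'0: "\<forall>k\<ge>q. b' k = 0" and b'orth: "\<forall>z. ipq q b' (DF F x z) = 0"
    and b'z: "\<forall>k<q. D2F F x v w k = DF F x z1 k + b' k" by blast
  have diff: "b' k - b k = DF F x (zz - z1) k" if "k < q" for k
    using bz b'z lin that by fastforce
  have "(\<Sum>k<q. (b' k - b k) * (b' k - b k)) = (\<Sum>k<q. b' k * DF F x (zz - z1) k) - (\<Sum>k<q. b k * DF F x (zz - z1) k)"
    using diff by (simp add: sum_subtractf[symmetric] algebra_simps)
  also have "\<dots> = 0" using b'orth borth unfolding ipq_def by simp
  finally have "(\<Sum>k<q. (b' k - b k)\<^sup>2) = 0" by (simp add: power2_eq_square)
  then have "\<forall>k\<in>{..<q}. (b' k - b k)\<^sup>2 = 0"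
    by (subst (asm) sum_nonneg_eq_0_iff) auto
  then have "b' k = b k" if "k < q" for k using that by auto
  with b'0 b0 show "b' = b" by (metis ext not_le)
qed

definition FF :: "(nat \<Rightarrow> 'n::finite) \<Rightarrow> nat \<Rightarrow> real^'n \<Rightarrow> real" where
  "FF h k = (if k < CARD('n) then Q 0 (axis (h k) 1) 0 else Q 0 0 1)"

lemma sumh:
  assumes "bij_betw (h::nat \<Rightarrow> 'n::finite) {..<CARD('n)} (UNIV::'n set)"
  shows "(\<Sum>k<CARD('n). f (h k)) = (\<Sum>i\<in>UNIV. (f i :: real))"
  using sum.reindex_bij_betw[OF assms] by simp

lemma DF_FF: "DF (FF (h::nat \<Rightarrow> 'n::finite)) x v k = (if k < CARD('n) then v $ h k else 2 * (x \<bullet> (v::real^'n)))"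
  unfolding DF_def FF_def by (auto simp: dderiv_Q Q_apply inner_axis inner_commute)

lemma D2F_FF: "D2F (FF (h::nat \<Rightarrow> 'n::finite)) x v w k = (if k < CARD('n) then 0 else 2 * (v \<bullet> (w::real^'n)))"
  unfolding D2F_def FF_def by (auto simp: dderiv_Q Q_apply inner_axis inner_commute)

lemma ipq_Suc: "ipq (Suc N) a b = (\<Sum>k<N. a k * b k) + a N * b N"
  unfolding ipq_def by simp

lemma inner_sum_h:
  assumes "bij_betw (h::nat \<Rightarrow> 'n::finite) {..<CARD('n)} (UNIV::'n set)"
  shows "(\<Sum>k<CARD('n). (a::real^'n) $ h k * b $ h k) = a \<bullet> b"
  using sumh[OF assms, of "\<lambda>i. a $ i * b $ i"] by (simp add: inner_vec_def)

lemma iso_FF: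
  assumes "bij_betw (h::nat \<Rightarrow> 'n::finite) {..<CARD('n)} (UNIV::'n set)"
  shows "isometric_immersion paraboloid_metric (Suc CARD('n)) (FF h)"
  unfolding isometric_immersion_def
proof (intro conjI allI impI)
  fix k show "smooth_fn (FF h k)" unfolding FF_def by (simp add: smooth_Q)
next
  fix x v w :: "real^'n"
  show "ipq (Suc CARD('n)) (DF (FF h) x v) (DF (FF h) x w) = paraboloid_metric x v w"
    unfolding ipq_Suc paraboloid_metric_def DF_FF using inner_sum_h[OF assms, of v w]
    by simp
qed

definition nu :: "(nat \<Rightarrow> 'n::finite) \<Rightarrow> real^'n \<Rightarrow> nat \<Rightarrow> real" where
  "nu h x k = (if k < CARD('n) then -2 * x $ h k else if k = CARD('n) then 1 else 0)"

definition cc :: "real^'n \<Rightarrow> real^'n \<Rightarrow> real^'n \<Rightarrow> real" where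
  "cc x v w = 2 * (v \<bullet> w) / (1 + 4 * (x \<bullet> x))"

lemma sff_FF:
  assumes "bij_betw (h::nat \<Rightarrow> 'n::finite) {..<CARD('n)} (UNIV::'n set)"
  shows "sff (Suc CARD('n)) (FF h) x v w = (\<lambda>k. cc x v w * nu h x k)"
proof (rule sff_unique[where zz = "(2 * cc x v w) *\<^sub>R x"])
  show "\<forall>k\<ge>Suc CARD('n). cc x v w * nu h x k = 0" by (simp add: nu_def)
  show "\<forall>z. ipq (Suc CARD('n)) (\<lambda>k. cc x v w * nu h x k) (DF (FF h) x z) = 0"
  proof
    fix z :: "real^'n"
    have "(\<Sum>k<CARD('n). cc x v w * nu h x k * DF (FF h) x z k) = -2 * cc x v w * (\<Sum>k<CARD('n). x $ h k * z $ h k)"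
      by (simp add: nu_def DF_FF sum_distrib_left algebra_simps)
    then show "ipq (Suc CARD('n)) (\<lambda>k. cc x v w * nu h x k) (DF (FF h) x z) = 0"
      unfolding ipq_Suc using inner_sum_h[OF assms, of x z] by (simp add: nu_def DF_FF)
  qed
  have pos: "1 + 4 * (x \<bullet> x) > 0" by (simp add: add_pos_nonneg)
  show "\<forall>k<Suc CARD('n). D2F (FF h) x v w k = DF (FF h) x ((2 * cc x v w) *\<^sub>R x) k + cc x v w * nu h x k"
  proof (intro allI impI)
    fix k assume "k < Suc CARD('n)"
    then consider "k < CARD('n)" | "k = CARD('n)" by linarith
    then show "D2F (FF h) x v w k = DF (FF h) x ((2 * cc x v w) *\<^sub>R x) k + cc x v w * nu h x k"
    proof cases
      case 1 then show ?thesis by (simp add: D2F_FF DF_FF nu_def)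
    next
      case 2
      have "cc x v w * (1 + 4 * (x \<bullet> x)) = 2 * (v \<bullet> w)" using pos by (simp add: cc_def)
      then show ?thesis using 2 by (simp add: D2F_FF DF_FF nu_def algebra_simps)
    qed
  qed
  show "DF (FF h) x (z1 - z2) k = DF (FF h) x z1 k - DF (FF h) x z2 k" for z1 z2 k
    by (simp add: DF_FF inner_diff_right)
qed

lemma ipq_nu:
  assumes "bij_betw (h::nat \<Rightarrow> 'n::finite) {..<CARD('n)} (UNIV::'n set)"
  shows "ipq (Suc CARD('n)) (\<lambda>k. a * nu h x k) (\<lambda>k. b * nu h x k) = a * b * (1 + 4 * (x \<bullet> x))"
proof -
  have "(\<Sum>k<CARD('n). a * nu h x k * (b * nu h x k)) = 4 * a * b * (\<Sum>k<CARD('n). x $ h k * x $ h k)"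
    by (simp add: nu_def sum_distrib_left algebra_simps)
  then show ?thesis unfolding ipq_Suc using inner_sum_h[OF assms, of x x]
    by (simp add: nu_def algebra_simps)
qed

lemma pm_sum_left: "paraboloid_metric x (\<Sum>\<beta>\<in>A. c \<beta> *\<^sub>R f \<beta>) w = (\<Sum>\<beta>\<in>A. c \<beta> * paraboloid_metric x (f \<beta>) w)"
  unfolding paraboloid_metric_def
  by (simp add: inner_sum_left inner_sum_right sum.distrib sum_distrib_left sum_distrib_right algebra_simps)

lemma pm_sym: "paraboloid_metric x a b = paraboloid_metric x b a"
  unfolding paraboloid_metric_def by (simp add: inner_commute)

lemma pm_diff_left: "paraboloid_metric x (a - b) w = paraboloid_metric x a w - paraboloid_metric x b w"
  unfolding paraboloid_metric_def by (simp add: inner_diff_left inner_diff_right algebra_simps)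

lemma pm_nonneg: "paraboloid_metric x a a \<ge> 0"
  unfolding paraboloid_metric_def by (simp add: add_nonneg_nonneg)

lemma bessel:
  fixes x u :: "real^'n"
  assumes on: "orthonormal_frame paraboloid_metric x e"
  shows "(\<Sum>\<beta>\<in>UNIV. (paraboloid_metric x u (e \<beta>))\<^sup>2) \<le> paraboloid_metric x u u"
proof -
  define g where "g = paraboloid_metric x"
  define c where "c = (\<lambda>\<beta>. g u (e \<beta>))"
  define p where "p = (\<Sum>\<beta>\<in>UNIV. c \<beta> *\<^sub>R e \<beta>)"
  have ge: "g (e \<beta>) (e \<gamma>) = (if \<beta> = \<gamma> then 1 else 0)" for \<beta> \<gamma>
    using on unfolding orthonormal_frame_def g_def by simp
  have pe: "g p (e \<gamma>) = c \<gamma>" for \<gamma>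
  proof -
    have "g p (e \<gamma>) = (\<Sum>\<beta>\<in>UNIV. c \<beta> * g (e \<beta>) (e \<gamma>))"
      unfolding p_def g_def pm_sum_left ..
    also have "\<dots> = (\<Sum>\<beta>\<in>UNIV. if \<beta> = \<gamma> then c \<beta> else 0)"
      by (rule sum.cong) (auto simp: ge)
    finally show ?thesis by simp
  qed
  have up: "g u p = (\<Sum>\<beta>\<in>UNIV. (c \<beta>)\<^sup>2)"
  proof -
    have "g u p = g p u" by (simp add: g_def pm_sym)
    also have "\<dots> = (\<Sum>\<beta>\<in>UNIV. c \<beta> * g (e \<beta>) u)" unfolding p_def g_def pm_sum_left ..
    also have "\<dots> = (\<Sum>\<beta>\<in>UNIV. (c \<beta>)\<^sup>2)" by (simp add: c_def g_def pm_sym power2_eq_square)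
    finally show ?thesis .
  qed
  have pp: "g p p = (\<Sum>\<beta>\<in>UNIV. (c \<beta>)\<^sup>2)"
  proof -
    have "g p p = (\<Sum>\<beta>\<in>UNIV. c \<beta> * g (e \<beta>) p)" by (subst (1) p_def, unfold g_def pm_sum_left) (rule refl)
    also have "\<dots> = (\<Sum>\<beta>\<in>UNIV. (c \<beta>)\<^sup>2)"
      using pe by (simp add: g_def pm_sym[of x _ p] power2_eq_square)
    finally show ?thesis .
  qed
  have "0 \<le> g (u - p) (u - p)" unfolding g_def by (rule pm_nonneg)
  also have "\<dots> = g u u - 2 * g u p + g p p"
    unfolding g_def pm_diff_left by (subst (1 2) pm_sym, simp add: pm_diff_left pm_sym[of x p u])
  finally show ?thesis using up pp unfolding c_def g_def by simp
qed

lemma rep_bound: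
  fixes x w :: "real^'n"
  assumes on: "orthonormal_frame paraboloid_metric x e"
  shows "(\<Sum>\<beta>\<in>UNIV. (w \<bullet> e \<beta>)\<^sup>2) \<le> w \<bullet> w - 4 * (x \<bullet> w)\<^sup>2 / (1 + 4 * (x \<bullet> x))"
proof -
  define s where "s = 1 + 4 * (x \<bullet> x)"
  have s: "s > 0" unfolding s_def by (simp add: add_pos_nonneg)
  define u where "u = w - (4 * (x \<bullet> w) / s) *\<^sub>R x"
  have xu: "x \<bullet> u = (x \<bullet> w) / s"
    using s unfolding u_def s_def by (simp add: inner_diff_right field_simps)
  have gu: "paraboloid_metric x u y = w \<bullet> y" for y
    unfolding paraboloid_metric_def xu
    unfolding u_def by (simp add: inner_diff_left algebra_simps)
  have "(\<Sum>\<beta>\<in>UNIV. (w \<bullet> e \<beta>)\<^sup>2) \<le> paraboloid_metric x u u"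
    using bessel[OF on, of u] by (simp add: gu)
  also have "\<dots> = w \<bullet> u" by (rule gu)
  also have "\<dots> = w \<bullet> w - 4 * (x \<bullet> w)\<^sup>2 / s"
    unfolding u_def by (simp add: inner_diff_right power2_eq_square inner_commute)
  finally show ?thesis unfolding s_def .
qed

lemma main_ineq:
  fixes x v :: "real^'n"
  assumes on: "orthonormal_frame paraboloid_metric x e" and n: "CARD('n) > 4"
    and v1: "paraboloid_metric x v v = 1"
  shows "4 * (\<Sum>\<beta>\<in>UNIV. (v \<bullet> e \<beta>)\<^sup>2) < (v \<bullet> v) * (\<Sum>\<beta>\<in>UNIV. e \<beta> \<bullet> e \<beta>)"
proof -
  define s where "s = 1 + 4 * (x \<bullet> x)"
  have s: "s > 0" unfolding s_def by (simp add: add_pos_nonneg)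
  have vpos: "v \<bullet> v > 0"
  proof -
    have "v \<noteq> 0" using v1 unfolding paraboloid_metric_def by auto
    then show ?thesis by simp
  qed
  have A: "(\<Sum>\<beta>\<in>UNIV. (v \<bullet> e \<beta>)\<^sup>2) \<le> v \<bullet> v"
    using rep_bound[OF on, of v] s by (smt (verit) divide_nonneg_pos s_def zero_le_power2)
  have ee: "e \<beta> \<bullet> e \<beta> = 1 - 4 * (x \<bullet> e \<beta>)\<^sup>2" for \<beta>
    using on unfolding orthonormal_frame_def paraboloid_metric_def
    by (metis (no_types) add_diff_cancel_right' power2_eq_square mult.assoc)
  have B: "(\<Sum>\<beta>\<in>UNIV. (x \<bullet> e \<beta>)\<^sup>2) \<le> (x \<bullet> x) / s"
  proof -
    have "x \<bullet> x - 4 * (x \<bullet> x)\<^sup>2 / s = (x \<bullet> x) / s"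
      using s unfolding s_def by (simp add: field_simps power2_eq_square)
    then show ?thesis using rep_bound[OF on, of x] unfolding s_def by simp
  qed
  have C: "4 * ((x \<bullet> x) / s) < 1"
    using s unfolding s_def by (simp add: field_simps)
  have "(\<Sum>\<beta>\<in>UNIV. e \<beta> \<bullet> e \<beta>) = real CARD('n) - 4 * (\<Sum>\<beta>\<in>UNIV. (x \<bullet> e \<beta>)\<^sup>2)"
    by (simp add: ee sum_subtractf sum_distrib_left)
  also have "\<dots> > real CARD('n) - 1" using B C by linarith
  finally have D: "(\<Sum>\<beta>\<in>UNIV. e \<beta> \<bullet> e \<beta>) > 4" using n by linarith
  have "4 * (\<Sum>\<beta>\<in>UNIV. (v \<bullet> e \<beta>)\<^sup>2) \<le> 4 * (v \<bullet> v)" using A by linarith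
  also have "\<dots> < (v \<bullet> v) * (\<Sum>\<beta>\<in>UNIV. e \<beta> \<bullet> e \<beta>)"
    using D vpos by (simp add: mult.commute)
  finally show ?thesis .
qed

lemma pos_dir:
  assumes n: "CARD('n) > 4"
  shows "Phi_SSU (paraboloid_metric :: real^'n \<Rightarrow> real^'n \<Rightarrow> real^'n \<Rightarrow> real)"
proof -
  obtain h :: "nat \<Rightarrow> 'n" where h0: "bij_betw h {0..<card (UNIV::'n set)} UNIV"
    using ex_bij_betw_nat_finite[of "UNIV::'n set"] by auto
  have h: "bij_betw h {..<CARD('n)} UNIV" using h0 by (simp add: atLeast0LessThan)
  show ?thesis unfolding Phi_SSU_def
  proof (intro exI conjI allI impI)
    show "isometric_immersion paraboloid_metric (Suc CARD('n)) (FF h)" by (rule iso_FF[OF h])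
  next
    fix x v :: "real^'n" and e
    assume v1: "paraboloid_metric x v v = 1" and on: "orthonormal_frame paraboloid_metric x e"
    define s where "s = 1 + 4 * (x \<bullet> x)"
    have s: "s > 0" unfolding s_def by (simp add: add_pos_nonneg)
    have trm: "4 * ipq (Suc CARD('n)) (sff (Suc CARD('n)) (FF h) x v (e \<beta>)) (sff (Suc CARD('n)) (FF h) x v (e \<beta>))
                 - ipq (Suc CARD('n)) (sff (Suc CARD('n)) (FF h) x v v) (sff (Suc CARD('n)) (FF h) x (e \<beta>) (e \<beta>))
          = (4 / s) * (4 * (v \<bullet> e \<beta>)\<^sup>2 - (v \<bullet> v) * (e \<beta> \<bullet> e \<beta>))" for \<beta>
      unfolding sff_FF[OF h] ipq_nu[OF h] cc_def s_def[symmetric]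
      using s by (simp add: field_simps power2_eq_square)
    have inner: "(\<Sum>\<beta>\<in>UNIV. 4 * (v \<bullet> e \<beta>)\<^sup>2 - (v \<bullet> v) * (e \<beta> \<bullet> e \<beta>))
        = 4 * (\<Sum>\<beta>\<in>UNIV. (v \<bullet> e \<beta>)\<^sup>2) - (v \<bullet> v) * (\<Sum>\<beta>\<in>UNIV. e \<beta> \<bullet> e \<beta>)"
      by (simp add: sum_subtractf sum_distrib_left)
    have "(\<Sum>\<beta>\<in>UNIV. (4 / s) * (4 * (v \<bullet> e \<beta>)\<^sup>2 - (v \<bullet> v) * (e \<beta> \<bullet> e \<beta>)))
        = (4 / s) * (\<Sum>\<beta>\<in>UNIV. 4 * (v \<bullet> e \<beta>)\<^sup>2 - (v \<bullet> v) * (e \<beta> \<bullet> e \<beta>))"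
      by (rule sum_distrib_left[symmetric])
    also have "\<dots> < 0"
      unfolding inner using main_ineq[OF on n v1] s by (intro mult_pos_neg) auto
    finally show "(\<Sum>\<beta>\<in>UNIV. 4 * ipq (Suc CARD('n)) (sff (Suc CARD('n)) (FF h) x v (e \<beta>)) (sff (Suc CARD('n)) (FF h) x v (e \<beta>))
                 - ipq (Suc CARD('n)) (sff (Suc CARD('n)) (FF h) x v v) (sff (Suc CARD('n)) (FF h) x (e \<beta>) (e \<beta>))) < 0"
      unfolding trm .
  qed
qed

theorem corollary5p1:
  shows "Phi_SSU (paraboloid_metric :: real^'n \<Rightarrow> real^'n \<Rightarrow> real^'n \<Rightarrow> real) \<longleftrightarrow> CARD('n) > 4"
  using neg_dir pos_dir by blast

end
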